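(* Let $P:\mathbb{Z}\to\mathbb{RP}^2$ be a $3$-nice sequence with every three consecutive points non-collinear, let $i\in\mathbb{Z}$, and let $x_{2i},x_{2i+1}$ be the corner invariants at index $i$. Suppose $P_{i-2},P_{i-1},P_i,P_{i+1}\in\mathbb{A}^2$, the triples $(P_{i-2},P_{i-1},P_i)$ and $(P_{i-1},P_i,P_{i+1})$ are positive, the quadrilateral with vertices $P_{i-2},P_{i-1},P_i,P_{i+1}$ (in this order) is convex, and $(x_{2i},x_{2i+1})\in(1,\infty)\times(0,1)$. Then $P_{i+2}\in\operatorname{int}(P_{i-2},P_{i-1},P_{i+1})$; moreover the quadrilateral with vertices $P_{i-1},P_i,P_{i+1},P_{i+2}$ is convex and the triples $(P_i,P_{i+1},P_{i+2})$ and $(P_{i-1},P_i,P_{i+2})$ are positive.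
   Context: The affine patch $\mathbb{A}^2=\{[x:y:1]\}\subset\mathbb{RP}^2$ is identified with $\mathbb{R}^2$. For $V_1,V_2,V_3\in\mathbb{A}^2$ with affine coordinates $\tilde V_j=(x_j,y_j,1)$, $\mathcal{O}(V_1,V_2,V_3)=\det(\tilde V_1,\tilde V_2,\tilde V_3)$; the triple is positive if $\mathcal{O}>0$. $\operatorname{int}(V_1,V_2,V_3)$ is the interior of the affine triangle. $P$ is $3$-nice if $P_j,P_{j+1},P_{j+3},P_{j+4}$ are in general position for every $j$. Inverse cross ratio: for four collinear points $A,B,C,D$, map their line projectively to the $x$-axis with coordinates $a,b,c,d$ and set $\chi(A,B,C,D)=\frac{(a-b)(c-d)}{(a-c)(b-d)}$ (value in $\mathbb{R}\cup\{\infty\}$, projectively invariant). Corner invariants: $x_{2i}=\chi(P_{i-2},P_{i-1},P_{i-2}P_{i-1}\cap P_iP_{i+1},P_{i-2}P_{i-1}\cap P_{i+1}P_{i+2})$ and $x_{2i+1}=\chi(P_{i+2},P_{i+1},P_{i+2}P_{i+1}\cap P_iP_{i-1},P_{i+2}P_{i+1}\cap P_{i-1}P_{i-2})$. *)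

theory Defs
  imports "HOL-Analysis.Analysis" "HOL-Analysis.Cross3" "HOL-Library.Extended_Real"
begin

text \<open>Points of RP^2 are represented by nonzero homogeneous coordinate vectors in real^3;
  all notions below are invariant under rescaling of the representatives.\<close>

definition det3 :: "real^3 \<Rightarrow> real^3 \<Rightarrow> real^3 \<Rightarrow> real" where
  "det3 A B C = A \<bullet> cross3 B C"

definition collinear_pt :: "real^3 \<Rightarrow> real^3 \<Rightarrow> real^3 \<Rightarrow> bool" where
  "collinear_pt A B C \<longleftrightarrow> det3 A B C = 0"

definition general_position4 :: "real^3 \<Rightarrow> real^3 \<Rightarrow> real^3 \<Rightarrow> real^3 \<Rightarrow> bool" where
  "general_position4 A B C D \<longleftrightarrow>
     \<not> collinear_pt A B C \<and> \<not> collinear_pt A B D \<and> \<not> collinear_pt A C D \<and> \<not> collinear_pt B C D"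

definition three_nice :: "(int \<Rightarrow> real^3) \<Rightarrow> bool" where
  "three_nice P \<longleftrightarrow> (\<forall>j. general_position4 (P j) (P (j+1)) (P (j+3)) (P (j+4)))"

definition meet :: "real^3 \<Rightarrow> real^3 \<Rightarrow> real^3 \<Rightarrow> real^3 \<Rightarrow> real^3" where
  "meet A B C D = cross3 (cross3 A B) (cross3 C D)"

text \<open>With n a normal vector of the common line, (X \<times> Y) \<bullet> n is (up to a common nonzero factor)
  the difference of the projective coordinates of X and Y on the line.\<close>
definition inv_cross_ratio :: "real^3 \<Rightarrow> real^3 \<Rightarrow> real^3 \<Rightarrow> real^3 \<Rightarrow> ereal" where
  "inv_cross_ratio A B C D =
     (let n = (SOME n. n \<noteq> 0 \<and> n \<bullet> A = 0 \<and> n \<bullet> B = 0 \<and> n \<bullet> C = 0 \<and> n \<bullet> D = 0);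
          d = (\<lambda>X Y. cross3 X Y \<bullet> n);
          num = d A B * d C D;
          den = d A C * d B D
      in if den = 0 then \<infinity> else ereal (num / den))"

definition corner_even :: "(int \<Rightarrow> real^3) \<Rightarrow> int \<Rightarrow> ereal" where
  "corner_even P i = inv_cross_ratio (P (i-2)) (P (i-1))
      (meet (P (i-2)) (P (i-1)) (P i) (P (i+1)))
      (meet (P (i-2)) (P (i-1)) (P (i+1)) (P (i+2)))"

definition corner_odd :: "(int \<Rightarrow> real^3) \<Rightarrow> int \<Rightarrow> ereal" where
  "corner_odd P i = inv_cross_ratio (P (i+2)) (P (i+1))
      (meet (P (i+2)) (P (i+1)) (P i) (P (i-1)))
      (meet (P (i+2)) (P (i+1)) (P (i-1)) (P (i-2)))"

definition in_A2 :: "real^3 \<Rightarrow> bool" where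
  "in_A2 X \<longleftrightarrow> X$3 \<noteq> 0"

definition aff :: "real^3 \<Rightarrow> real^2" where
  "aff X = vector [X$1 / X$3, X$2 / X$3]"

definition lift :: "real^2 \<Rightarrow> real^3" where
  "lift V = vector [V$1, V$2, 1]"

definition orient :: "real^2 \<Rightarrow> real^2 \<Rightarrow> real^2 \<Rightarrow> real" where
  "orient V1 V2 V3 = det3 (lift V1) (lift V2) (lift V3)"

definition positive_triple :: "real^2 \<Rightarrow> real^2 \<Rightarrow> real^2 \<Rightarrow> bool" where
  "positive_triple V1 V2 V3 \<longleftrightarrow> orient V1 V2 V3 > 0"

definition convex_quad :: "real^2 \<Rightarrow> real^2 \<Rightarrow> real^2 \<Rightarrow> real^2 \<Rightarrow> bool" where
  "convex_quad V1 V2 V3 V4 \<longleftrightarrow>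
     orient V1 V2 V3 * orient V1 V2 V4 > 0 \<and>
     orient V2 V3 V4 * orient V2 V3 V1 > 0 \<and>
     orient V3 V4 V1 * orient V3 V4 V2 > 0 \<and>
     orient V4 V1 V2 * orient V4 V1 V3 > 0"

definition tri_int :: "real^2 \<Rightarrow> real^2 \<Rightarrow> real^2 \<Rightarrow> (real^2) set" where
  "tri_int V1 V2 V3 = interior (convex hull {V1, V2, V3})"

end

theory Submission imports Defs begin

lemma det3_exp: "det3 X Y Z = X$1*(Y$2*Z$3 - Y$3*Z$2) + X$2*(Y$3*Z$1 - Y$1*Z$3) + X$3*(Y$1*Z$2 - Y$2*Z$1)"
  unfolding det3_def by (simp add: cross3_simps)

lemma cramer: "det3 X Y Z *\<^sub>R W = det3 W Y Z *\<^sub>R X + det3 X W Z *\<^sub>R Y + det3 X Y W *\<^sub>R Z"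
  by (simp add: vec_eq_iff forall_3 det3_exp) algebra

lemma meet_eq: "meet A B C D = det3 A C D *\<^sub>R B - det3 B C D *\<^sub>R A"
  by (simp add: meet_def vec_eq_iff forall_3 det3_exp cross_components) algebra

lemma det3_scale: "det3 (a *\<^sub>R X) (b *\<^sub>R Y) (c *\<^sub>R Z) = a*b*c*det3 X Y Z"
  by (simp add: det3_exp) algebra

lemma lift_aff: "in_A2 X \<Longrightarrow> X = X$3 *\<^sub>R lift (aff X)"
  by (simp add: in_A2_def lift_def aff_def vec_eq_iff forall_3 vector_def)

lemma lift3: "lift V $ 3 = 1" "lift V $ 1 = V$1" "lift V $ 2 = V$2"
  by (simp_all add: lift_def vector_def)

lemma aff_comp: "aff X $ 1 = X$1/X$3" "aff X $ 2 = X$2/X$3"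
  by (simp_all add: aff_def vector_def)


lemma icr:
  assumes C: "C = c1 *\<^sub>R A + c2 *\<^sub>R B" and D: "D = d1 *\<^sub>R A + d2 *\<^sub>R B"
    and fin: "inv_cross_ratio A B C D \<noteq> \<infinity>"
  shows "c2*d1 \<noteq> 0 \<and> inv_cross_ratio A B C D = ereal ((c1*d2 - c2*d1)/(-(c2*d1)))"
proof -
  define n where "n = (SOME n. n \<noteq> 0 \<and> n \<bullet> A = 0 \<and> n \<bullet> B = 0 \<and> n \<bullet> C = 0 \<and> n \<bullet> D = 0)"
  define k where "k = cross3 A B \<bullet> n"
  have ba: "cross3 B A \<bullet> n = - k" unfolding k_def
    by (metis cross_skew inner_minus_left)
  have AB: "cross3 A B \<bullet> n = k" by (simp add: k_def)
  have CD: "cross3 C D \<bullet> n = (c1*d2 - c2*d1) * k"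
    unfolding C D using ba
    by (simp add: cross_add_left cross_add_right cross_mult_left cross_mult_right inner_add_left k_def algebra_simps)
  have AC: "cross3 A C \<bullet> n = c2 * k"
    unfolding C by (simp add: cross_add_right cross_mult_right inner_add_left k_def)
  have BD: "cross3 B D \<bullet> n = - d1 * k"
    unfolding D using ba by (simp add: cross_add_right cross_mult_right inner_add_left)
  have eq: "inv_cross_ratio A B C D = (let num = k * ((c1*d2 - c2*d1) * k); den = c2*k*(-d1*k) in
      if den = 0 then \<infinity> else ereal (num/den))"
    unfolding inv_cross_ratio_def Let_def n_def[symmetric] AB CD AC BD by simp
  have "c2*k*(-d1*k) \<noteq> 0" using fin eq by (auto simp: Let_def)
  then have nz: "c2 \<noteq> 0" "d1 \<noteq> 0" "k \<noteq> 0" by auto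
  show ?thesis using eq nz by (simp add: Let_def field_simps)
qed

lemma det3_lin: "det3 (a *\<^sub>R X) Y Z = a * det3 X Y Z" "det3 X (a *\<^sub>R Y) Z = a * det3 X Y Z"
   "det3 X Y (a *\<^sub>R Z) = a * det3 X Y Z"
  by (simp_all add: det3_exp) algebra+

lemma det3_cyc: "det3 X Y Z = det3 Y Z X" and det3_swap: "det3 X Y Z = - det3 Y X Z"
  by (simp_all add: det3_exp) algebra+

lemma orient_lift: "orient U V W = det3 (lift U) (lift V) (lift W)"
  by (simp add: orient_def)

lemma collinear_orient: fixes x y z :: "real^2" assumes "collinear {x,y,z}" shows "orient x y z = 0"
proof -
  from assms consider "x = z" | u where "y = u *\<^sub>R x + (1-u) *\<^sub>R z"
    by (auto simp: collinear_3_expand)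
  then show ?thesis
  proof cases
    case 1 then show ?thesis by (simp add: orient_def det3_exp lift3 algebra_simps)
  next
    case 2
    then show ?thesis by (simp add: orient_def det3_exp lift3) (simp add: algebra_simps)
  qed
qed

lemma sign_lemma:
  fixes p q s alp bet dlt :: real
  assumes "p > 0" "q > 0" "s > 0" "q*bet/(s*alp) > 0" "0 < q*dlt/(alp*p+q*dlt)" "q*dlt/(alp*p+q*dlt) < 1"
  shows "(alp > 0 \<and> bet > 0 \<and> dlt > 0) \<or> (alp < 0 \<and> bet < 0 \<and> dlt < 0)"
proof -
  have "bet/alp > 0" using assms(2,3,4)
    by (metis divide_pos_pos mult.commute mult_pos_pos nonzero_mult_div_cancel_left times_divide_times_eq zero_less_divide_iff less_numeral_extra(3) order_less_irrefl)
  then have 1: "alp*bet > 0" by (auto simp add: zero_less_divide_iff zero_less_mult_iff)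
  define u where "u = q*dlt" define w where "w = alp*p"
  have h: "0 < u/(w+u)" "u/(w+u) < 1" using assms(5,6) by (simp_all add: u_def w_def)
  have "u*w > 0"
  proof (cases "w+u > 0")
    case True then show ?thesis using h by (simp add: zero_less_divide_iff divide_less_eq)
  next
    case False
    then have "w + u < 0" using h by (cases "w+u = 0") auto
    then show ?thesis using h by (simp add: zero_less_divide_iff divide_less_eq mult_neg_neg)
  qed
  then have 2: "alp*dlt > 0" using assms(1,2) unfolding u_def w_def
    by (auto simp add: zero_less_mult_iff mult_less_0_iff)
  from 1 2 show ?thesis by (auto simp: zero_less_mult_iff)
qed


lemma plucker1: "det3 X Y Z * det3 Y W E = det3 Y Z E * det3 X Y W + det3 X Y E * det3 Y W Z"
  by (simp add: det3_exp) algebra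

lemma plucker2: "det3 X Y Z * det3 W Z E = det3 Y Z E * det3 X W Z + det3 Z X E * det3 Y W Z"
  by (simp add: det3_exp) algebra

theorem mainTheorem14:
  fixes P :: "int \<Rightarrow> real^3" and i :: int
  assumes nonzero: "\<And>j. P j \<noteq> 0"
    and nice: "three_nice P"
    and consec: "\<And>j. \<not> collinear_pt (P j) (P (j+1)) (P (j+2))"
    and aff_pts: "in_A2 (P (i-2))" "in_A2 (P (i-1))" "in_A2 (P i)" "in_A2 (P (i+1))"
    and pos1: "positive_triple (aff (P (i-2))) (aff (P (i-1))) (aff (P i))"
    and pos2: "positive_triple (aff (P (i-1))) (aff (P i)) (aff (P (i+1)))"
    and cvx: "convex_quad (aff (P (i-2))) (aff (P (i-1))) (aff (P i)) (aff (P (i+1)))"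
    and x_even: "1 < corner_even P i" "corner_even P i < \<infinity>"
    and x_odd: "0 < corner_odd P i" "corner_odd P i < 1"
  shows "in_A2 (P (i+2)) \<and>
         aff (P (i+2)) \<in> tri_int (aff (P (i-2))) (aff (P (i-1))) (aff (P (i+1))) \<and>
         convex_quad (aff (P (i-1))) (aff (P i)) (aff (P (i+1))) (aff (P (i+2))) \<and>
         positive_triple (aff (P i)) (aff (P (i+1))) (aff (P (i+2))) \<and>
         positive_triple (aff (P (i-1))) (aff (P i)) (aff (P (i+2)))"
proof -
  define A where "A = P (i-2)"
  define B where "B = P (i-1)"
  define C where "C = P i"
  define D where "D = P (i+1)"
  define E where "E = P (i+2)"
  have ce: "corner_even P i = inv_cross_ratio A B (meet A B C D) (meet A B D E)"
    by (simp add: corner_even_def A_def B_def C_def D_def E_def)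
  have co: "corner_odd P i = inv_cross_ratio E D (meet E D C B) (meet E D B A)"
    by (simp add: corner_odd_def A_def B_def C_def D_def E_def)
  have inA: "in_A2 A" "in_A2 B" "in_A2 C" "in_A2 D"
    using aff_pts by (simp_all add: A_def B_def C_def D_def)
  define a where "a = A$3"
  define b where "b = B$3"
  define c where "c = C$3"
  define d where "d = D$3"
  have nz: "a \<noteq> 0" "b \<noteq> 0" "c \<noteq> 0" "d \<noteq> 0"
    using inA by (simp_all add: in_A2_def a_def b_def c_def d_def)
  define A' where "A' = lift (aff A)"
  define B' where "B' = lift (aff B)"
  define C' where "C' = lift (aff C)"
  define D' where "D' = lift (aff D)"
  have hA: "A = a *\<^sub>R A'" using lift_aff[OF inA(1)] by (simp add: a_def A'_def)
  have hB: "B = b *\<^sub>R B'" using lift_aff[OF inA(2)] by (simp add: b_def B'_def)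
  have hC: "C = c *\<^sub>R C'" using lift_aff[OF inA(3)] by (simp add: c_def C'_def)
  have hD: "D = d *\<^sub>R D'" using lift_aff[OF inA(4)] by (simp add: d_def D'_def)
  define p where "p = det3 A' B' C'"
  define q where "q = det3 B' C' D'"
  define m where "m = det3 A' B' D'"
  define sv where "sv = det3 A' C' D'"
  have p: "p > 0" using pos1 by (simp add: positive_triple_def orient_lift p_def A'_def B'_def C'_def A_def B_def C_def)
  have q: "q > 0" using pos2 by (simp add: positive_triple_def orient_lift q_def D'_def B'_def C'_def D_def B_def C_def)
  have "p * m > 0" using cvx by (simp add: convex_quad_def orient_lift p_def m_def A'_def B'_def C'_def D'_def A_def B_def C_def D_def)
  then have m: "m > 0" using p by (simp add: zero_less_mult_iff)
  have "det3 C' D' A' * det3 C' D' B' > 0" using cvx by (simp add: convex_quad_def orient_lift A'_def B'_def C'_def D'_def A_def B_def C_def D_def)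
  moreover have "det3 C' D' A' = sv" "det3 C' D' B' = q" by (simp_all add: sv_def q_def det3_exp algebra_simps)
  ultimately have sv: "sv > 0" using q by (simp add: zero_less_mult_iff)
  define alp where "alp = det3 B' D' E"
  define bet where "bet = det3 D' A' E"
  define dlt where "dlt = det3 A' B' E"
  define bce where "bce = det3 B' C' E"
  define cde where "cde = det3 C' D' E"
  have pl1: "m * bce = alp * p + dlt * q"
    unfolding m_def bce_def alp_def p_def dlt_def q_def by (rule plucker1)
  have pl2: "m * cde = alp * sv + bet * q"
    unfolding m_def cde_def alp_def sv_def bet_def q_def by (rule plucker2)
  have me1: "meet A B C D = (- det3 B C D) *\<^sub>R A + det3 A C D *\<^sub>R B" by (simp add: meet_eq)
  have me2: "meet A B D E = (- det3 B D E) *\<^sub>R A + det3 A D E *\<^sub>R B" by (simp add: meet_eq)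
  have "inv_cross_ratio A B (meet A B C D) (meet A B D E) \<noteq> \<infinity>" using x_even(2) ce by simp
  from icr[OF me1 me2 this] have E1: "det3 A C D * - det3 B D E \<noteq> 0"
    "corner_even P i = ereal ((- det3 B C D * det3 A D E - det3 A C D * - det3 B D E) / - (det3 A C D * - det3 B D E))"
    using ce by auto
  have d1: "det3 B C D = b*c*d*q" "det3 A C D = a*c*d* sv" "det3 B D E = b*d*alp" "det3 A D E = - (a*d*bet)"
    unfolding hA hB hC hD q_def sv_def alp_def bet_def by (simp_all add: det3_lin det3_exp algebra_simps)
  have aln: "alp \<noteq> 0" using E1(1) d1 by simp
  have "1 < (- det3 B C D * det3 A D E - det3 A C D * - det3 B D E) / - (det3 A C D * - det3 B D E)"
    using x_even(1) E1(2) by simp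
  also have "(- det3 B C D * det3 A D E - det3 A C D * - det3 B D E) / - (det3 A C D * - det3 B D E)
     = 1 + q*bet/(sv*alp)" unfolding d1 using nz aln sv by (simp add: field_simps)
  finally have ev: "q*bet/(sv*alp) > 0" by simp
  have mo1: "meet E D C B = (- det3 D C B) *\<^sub>R E + det3 E C B *\<^sub>R D" by (simp add: meet_eq)
  have mo2: "meet E D B A = (- det3 D B A) *\<^sub>R E + det3 E B A *\<^sub>R D" by (simp add: meet_eq)
  have "inv_cross_ratio E D (meet E D C B) (meet E D B A) \<noteq> \<infinity>" using x_odd(2) co by auto
  from icr[OF mo1 mo2 this] have O1: "det3 E C B * - det3 D B A \<noteq> 0"
    "corner_odd P i = ereal ((- det3 D C B * det3 E B A - det3 E C B * - det3 D B A) / - (det3 E C B * - det3 D B A))"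
    using co by auto
  have d2: "det3 D C B = - (b*c*d*q)" "det3 E C B = - (b*c*bce)" "det3 D B A = - (a*b*d*m)" "det3 E B A = - (a*b*dlt)"
    unfolding hA hB hC hD q_def m_def bce_def dlt_def by (simp_all add: det3_lin det3_exp algebra_simps)
  have bcen: "bce \<noteq> 0" using O1(1) d2 by auto
  have oval: "(- det3 D C B * det3 E B A - det3 E C B * - det3 D B A) / - (det3 E C B * - det3 D B A)
     = 1 - q*dlt/(alp*p+q*dlt)"
  proof -
    have "alp*p+q*dlt = m*bce" using pl1 by (simp add: algebra_simps)
    then show ?thesis unfolding d2 using nz bcen m by (simp add: field_simps)
  qed
  have "0 < 1 - q*dlt/(alp*p+q*dlt)" "1 - q*dlt/(alp*p+q*dlt) < 1"
    using x_odd O1(2) oval by simp_all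
  then have od: "0 < q*dlt/(alp*p+q*dlt)" "q*dlt/(alp*p+q*dlt) < 1" by simp_all
  from sign_lemma[OF p q sv ev od] have sg: "(alp > 0 \<and> bet > 0 \<and> dlt > 0) \<or> (alp < 0 \<and> bet < 0 \<and> dlt < 0)" .
  have cr: "m *\<^sub>R E = alp *\<^sub>R A' + bet *\<^sub>R B' + dlt *\<^sub>R D'"
  proof -
    have "det3 E B' D' = alp" "det3 A' E D' = bet" unfolding alp_def bet_def by (simp_all add: det3_exp algebra_simps)
    then show ?thesis using cramer[of A' B' D' E] by (simp add: m_def dlt_def)
  qed
  have crc: "m * E$j = alp * A'$j + bet * B'$j + dlt * D'$j" for j
    using arg_cong[OF cr, of "\<lambda>v. v$j"] by simp
  have ksum: "m * E$3 = alp + bet + dlt" using crc[of 3] by (simp add: A'_def B'_def D'_def lift3)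
  define e3 where "e3 = E$3"
  define k where "k = alp + bet + dlt"
  have kpos: "alp/k > 0" "bet/k > 0" "dlt/k > 0" using sg unfolding k_def
    by (auto simp: zero_less_divide_iff)
  have kn: "k \<noteq> 0" using kpos by auto
  have e3k: "e3 = k/m" using ksum m by (simp add: e3_def k_def field_simps)
  have e3n: "e3 \<noteq> 0" using e3k kn m by simp
  have inE: "in_A2 E" using e3n by (simp add: in_A2_def e3_def)
  define E' where "E' = lift (aff E)"
  have hE: "E = e3 *\<^sub>R E'" using lift_aff[OF inE] by (simp add: e3_def E'_def)
  have dE: "det3 X Y E' = det3 X Y E / e3" for X Y
    using e3n by (simp add: hE det3_lin)
  have pa: "det3 B' D' E' > 0" "det3 B' C' E' > 0" "det3 C' D' E' > 0"
  proof -
    have "det3 B' D' E' = m * (alp/k)" using dE[of B' D'] e3k m kn by (simp add: alp_def field_simps)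
    then show "det3 B' D' E' > 0" using m kpos by (metis mult_pos_pos)
    have "det3 B' C' E' = (alp*p + dlt*q)/k" using dE[of B' C'] e3k m kn pl1
      by (simp add: bce_def field_simps)
    also have "\<dots> = (alp/k)*p + (dlt/k)*q" by (simp add: add_divide_distrib)
    also have "\<dots> > 0" using kpos p q by (intro add_pos_pos mult_pos_pos)
    finally show "det3 B' C' E' > 0" .
    have "det3 C' D' E' = (alp* sv + bet*q)/k" using dE[of C' D'] e3k m kn pl2
      by (simp add: cde_def field_simps)
    also have "\<dots> = (alp/k)* sv + (bet/k)*q" by (simp add: add_divide_distrib)
    also have "\<dots> > 0" using kpos sv q by (intro add_pos_pos mult_pos_pos)
    finally show "det3 C' D' E' > 0" .
  qed
  have cyc: "det3 D' E' B' = det3 B' D' E'" "det3 D' E' C' = det3 C' D' E'"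
     "det3 E' B' C' = det3 B' C' E'" "det3 E' B' D' = det3 B' D' E'" "det3 C' D' B' = q"
    by (simp_all add: q_def det3_exp algebra_simps)
  have g3: "convex_quad (aff B) (aff C) (aff D) (aff E)"
    unfolding convex_quad_def orient_lift B'_def[symmetric] C'_def[symmetric] D'_def[symmetric] E'_def[symmetric]
      q_def[symmetric] cyc using pa q by simp
  have g4: "positive_triple (aff C) (aff D) (aff E)" "positive_triple (aff B) (aff C) (aff E)"
    unfolding positive_triple_def orient_lift C'_def[symmetric] D'_def[symmetric] E'_def[symmetric] B'_def[symmetric]
    using pa by simp_all
  have ncol: "\<not> collinear {aff A, aff B, aff D}"
    using collinear_orient[of "aff A" "aff B" "aff D"] m by (auto simp: orient_lift m_def A'_def B'_def D'_def)
  have comb: "aff E = (alp/k) *\<^sub>R aff A + (bet/k) *\<^sub>R aff B + (dlt/k) *\<^sub>R aff D"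
  proof -
    have c1: "aff E $ 1 = (alp/k) * aff A $ 1 + (bet/k) * aff B $ 1 + (dlt/k) * aff D $ 1"
    proof -
      have "E$1 = (alp * A'$1 + bet * B'$1 + dlt * D'$1)/m" using crc[of 1] m by (simp add: field_simps)
      moreover have "A'$1 = aff A $ 1" "B'$1 = aff B $ 1" "D'$1 = aff D $ 1" "aff E $ 1 = E$1 / e3"
        by (auto simp: A'_def B'_def D'_def lift3 aff_comp e3_def)
      ultimately show ?thesis using e3k m kn by (simp add: field_simps)
    qed
    have c2: "aff E $ 2 = (alp/k) * aff A $ 2 + (bet/k) * aff B $ 2 + (dlt/k) * aff D $ 2"
    proof -
      have "E$2 = (alp * A'$2 + bet * B'$2 + dlt * D'$2)/m" using crc[of 2] m by (simp add: field_simps)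
      moreover have "A'$2 = aff A $ 2" "B'$2 = aff B $ 2" "D'$2 = aff D $ 2" "aff E $ 2 = E$2 / e3"
        by (auto simp: A'_def B'_def D'_def lift3 aff_comp e3_def)
      ultimately show ?thesis using e3k m kn by (simp add: field_simps)
    qed
    from c1 c2 have "\<And>j. j = 1 \<or> j = 2 \<Longrightarrow> aff E $ j = (alp/k) * aff A $ j + (bet/k) * aff B $ j + (dlt/k) * aff D $ j"
      by auto
    then show ?thesis by (simp add: vec_eq_iff forall_2)
  qed
  have sum1: "alp/k + bet/k + dlt/k = 1"
  proof -
    have "alp/k + bet/k + dlt/k = (alp+bet+dlt)/k" by (simp add: add_divide_distrib)
    then show ?thesis using kn by (simp add: k_def[symmetric])
  qed
  have g2: "aff E \<in> tri_int (aff A) (aff B) (aff D)"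
  proof -
    have ih: "interior (convex hull {aff A, aff B, aff D}) =
         {v. \<exists>x y z. 0 < x \<and> 0 < y \<and> 0 < z \<and> x + y + z = 1 \<and> x *\<^sub>R aff A + y *\<^sub>R aff B + z *\<^sub>R aff D = v}"
      by (rule interior_convex_hull_3_minimal[OF ncol]) simp
    show ?thesis unfolding tri_int_def ih
      using kpos sum1 comb[symmetric] by (intro CollectI exI[of _ "alp/k"] exI[of _ "bet/k"] exI[of _ "dlt/k"]) simp
  qed
  show ?thesis using inE g2 g3 g4 by (simp add: A_def B_def C_def D_def E_def)
qed
end
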